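(* Let $X$ be a compact scattered space with countable scattered height. Suppose that to each $x\in X$ one can assign a clopen neighborhood $U_x$ of $x$ such that $U_x\cap X^{(h(x))}=\{x\}$ and $\{U_x:x\in X\}$ is point-countable. If $X$ has a $P$-base for some directed set $P$ with calibre $(\omega_1,\omega)$, then $X$ is countable, hence metrizable.
   Context: All spaces are Tychonoff. $X$ is scattered if every nonempty subspace has an isolated point; for $A\subseteq X$ let $A'$ be the set of non-isolated points of $A$, set $X^{(0)}=X$, $X^{(\alpha)}=\bigcap_{\beta<\alpha}(X^{(\beta)})'$ for $\alpha>0$; for $x\in X$, $h(x)$ is the ordinal with $x\in X^{(h(x))}\setminus X^{(h(x)+1)}$, and the scattered height is $h(X)=\sup\{h(x):x\in X\}$. A family is point-countable if each point lies in only countably many members. A $P$-base is an assignment to each $x\in X$ of a neighborhood base $\{U_p:p\in P\}$ at $x$ with $U_p\subseteq U_{p'}$ whenever $p\ge p'$. A directed set has calibre $(\omega_1,\omega)$ if every uncountable subset contains an infinite subset with an upper bound. *)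

theory Defs
  imports "HOL-Analysis.Analysis"
begin

definition nonisol :: "'a topology \<Rightarrow> 'a set \<Rightarrow> 'a set" where
  "nonisol X A = A \<inter> (X derived_set_of A)"

definition scattered_space :: "'a topology \<Rightarrow> bool" where
  "scattered_space X \<longleftrightarrow>
     (\<forall>A. A \<subseteq> topspace X \<and> A \<noteq> {} \<longrightarrow> (\<exists>x\<in>A. x \<notin> nonisol X A))"

text \<open>Cantor--Bendixson derivatives indexed by a well-ordered type:
  X^(alpha) = X \<inter> INTER over beta < alpha of (X^(beta))'  (so X^(0) = X).\<close>
definition cb_deriv :: "'a topology \<Rightarrow> 'o::wellorder \<Rightarrow> 'a set" where
  "cb_deriv X = wfrec {(b, a). b < a}
      (\<lambda>f a. topspace X \<inter> (\<Inter>b\<in>{b. b < a}. nonisol X (f b)))"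

text \<open>Scattered height of a point: the alpha with x in X^(alpha) minus X^(alpha+1) = (X^(alpha))'.\<close>
definition cb_height :: "'a topology \<Rightarrow> 'a \<Rightarrow> 'o::wellorder" where
  "cb_height X x = (LEAST a. x \<in> cb_deriv X a \<and> x \<notin> nonisol X (cb_deriv X a))"

definition point_countable :: "'a topology \<Rightarrow> 'a set set \<Rightarrow> bool" where
  "point_countable X \<U> \<longleftrightarrow> (\<forall>y\<in>topspace X. countable {V\<in>\<U>. y \<in> V})"

definition directed_set :: "'p set \<Rightarrow> ('p \<Rightarrow> 'p \<Rightarrow> bool) \<Rightarrow> bool" where
  "directed_set P le \<longleftrightarrow>
     (\<forall>p\<in>P. le p p) \<and>
     (\<forall>p\<in>P. \<forall>q\<in>P. \<forall>r\<in>P. le p q \<and> le q r \<longrightarrow> le p r) \<and>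
     (\<forall>p\<in>P. \<forall>q\<in>P. \<exists>r\<in>P. le p r \<and> le q r)"

definition calibre_omega1_omega :: "'p set \<Rightarrow> ('p \<Rightarrow> 'p \<Rightarrow> bool) \<Rightarrow> bool" where
  "calibre_omega1_omega P le \<longleftrightarrow>
     (\<forall>Q. Q \<subseteq> P \<and> uncountable Q \<longrightarrow>
        (\<exists>R. R \<subseteq> Q \<and> infinite R \<and> (\<exists>u\<in>P. \<forall>r\<in>R. le r u)))"

definition has_P_base :: "'a topology \<Rightarrow> 'p set \<Rightarrow> ('p \<Rightarrow> 'p \<Rightarrow> bool) \<Rightarrow> bool" where
  "has_P_base X P le \<longleftrightarrow>
     (\<exists>B :: 'a \<Rightarrow> 'p \<Rightarrow> 'a set. \<forall>x\<in>topspace X.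
        (\<forall>p\<in>P. B x p \<subseteq> topspace X \<and> x \<in> X interior_of (B x p)) \<and>
        (\<forall>W. openin X W \<and> x \<in> W \<longrightarrow> (\<exists>p\<in>P. B x p \<subseteq> W)) \<and>
        (\<forall>p\<in>P. \<forall>p'\<in>P. le p' p \<longrightarrow> B x p \<subseteq> B x p'))"

end

theory Submission
  imports Defs
begin


lemma indep_exists:
  fixes S :: "'a set" and V :: "'a \<Rightarrow> 'a set"
  assumes unc: "uncountable S"
    and Vc: "\<And>z. z \<in> S \<Longrightarrow> countable (V z)"
    and pc: "\<And>w. w \<in> S \<Longrightarrow> countable {z \<in> S. w \<in> V z}"
  shows "\<exists>A. A \<subseteq> S \<and> uncountable A \<and>
           (\<forall>z\<in>S. \<forall>a\<in>A. \<forall>b\<in>A. a \<in> V z \<and> b \<in> V z \<longrightarrow> a = b)"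
proof -
  define Fam where "Fam = {A. A \<subseteq> S \<and> (\<forall>z\<in>S. \<forall>a\<in>A. \<forall>b\<in>A. a \<in> V z \<and> b \<in> V z \<longrightarrow> a = b)}"
  have "\<forall>C\<in>chains Fam. \<Union>C \<in> Fam"
  proof
    fix C assume C: "C \<in> chains Fam"
    then have CF: "C \<subseteq> Fam" and ch: "\<forall>A\<in>C. \<forall>B\<in>C. A \<subseteq> B \<or> B \<subseteq> A"
      by (auto simp: chains_def chain_subset_def)
    show "\<Union>C \<in> Fam"
      unfolding Fam_def
    proof (intro CollectI conjI ballI impI)
      show "\<Union>C \<subseteq> S" using CF by (auto simp: Fam_def)
    next
      fix z a b assume z: "z \<in> S" and a: "a \<in> \<Union>C" and b: "b \<in> \<Union>C" and ab: "a \<in> V z \<and> b \<in> V z"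
      obtain A1 where A1: "A1 \<in> C" "a \<in> A1" using a by auto
      obtain A2 where A2: "A2 \<in> C" "b \<in> A2" using b by auto
      have "A1 \<subseteq> A2 \<or> A2 \<subseteq> A1" using ch A1 A2 by auto
      then obtain A3 where "A3 \<in> C" "a \<in> A3" "b \<in> A3" using A1 A2 by auto
      then show "a = b" using CF z ab by (auto simp: Fam_def)
    qed
  qed
  then obtain M where M: "M \<in> Fam" and Mmax: "\<forall>X\<in>Fam. M \<subseteq> X \<longrightarrow> X = M"
    using Zorn_Lemma by blast
  have "uncountable M"
  proof
    assume cM: "countable M"
    define Z where "Z = {z \<in> S. V z \<inter> M \<noteq> {}}"
    have MS: "M \<subseteq> S" using M by (auto simp: Fam_def)
    have "Z \<subseteq> (\<Union>m\<in>M. {z \<in> S. m \<in> V z})" by (auto simp: Z_def)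
    moreover have "countable (\<Union>m\<in>M. {z \<in> S. m \<in> V z})"
      using cM pc MS by (intro countable_UN) auto
    ultimately have cZ: "countable Z" by (rule countable_subset)
    define Nb where "Nb = (\<Union>z\<in>Z. V z)"
    have "countable Nb" unfolding Nb_def using cZ Vc by (intro countable_UN) (auto simp: Z_def)
    then have "countable (Nb \<union> M)" using cM by simp
    then have "\<not> S \<subseteq> Nb \<union> M" using unc countable_subset by blast
    then obtain b where b: "b \<in> S" "b \<notin> Nb" "b \<notin> M" by auto
    have "insert b M \<in> Fam"
      unfolding Fam_def
    proof (intro CollectI conjI ballI impI)
      show "insert b M \<subseteq> S" using b MS by auto
    next
      fix z a c assume z: "z \<in> S" and a: "a \<in> insert b M" and c: "c \<in> insert b M"
        and ac: "a \<in> V z \<and> c \<in> V z"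
      show "a = c"
      proof (cases "a = b")
        case True
        show ?thesis
        proof (cases "c = b")
          case True then show ?thesis using \<open>a = b\<close> by simp
        next
          case False
          then have "c \<in> M" using c by auto
          then have "z \<in> Z" using z ac by (auto simp: Z_def)
          then have "b \<in> Nb" using ac True by (auto simp: Nb_def)
          then show ?thesis using b by simp
        qed
      next
        case False
        then have aM: "a \<in> M" using a by auto
        show ?thesis
        proof (cases "c = b")
          case True
          have "z \<in> Z" using z ac aM by (auto simp: Z_def)
          then have "b \<in> Nb" using ac True by (auto simp: Nb_def)
          then show ?thesis using b by simp
        next
          case False
          then have "c \<in> M" using c by auto
          then show ?thesis using M aM z ac by (auto simp: Fam_def)
        qed
      qed
    qed
    then have "insert b M = M" using Mmax by blast
    then show False using b by auto
  qed
  then show ?thesis using M by (auto simp: Fam_def)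
qed

lemma calibre_extract:
  fixes A :: "'a set" and f :: "'a \<Rightarrow> 'p"
  assumes unc: "uncountable A" and fP: "f ` A \<subseteq> P"
    and dir: "directed_set P le" and cal: "calibre_omega1_omega P le"
  shows "\<exists>R\<subseteq>A. infinite R \<and> (\<exists>u\<in>P. \<forall>a\<in>R. le (f a) u)"
proof (cases "countable (f ` A)")
  case True
  have AU: "A = (\<Union>p\<in>f ` A. A \<inter> f -` {p})" by auto
  have "\<exists>p\<in>f ` A. uncountable (A \<inter> f -` {p})"
  proof (rule ccontr)
    assume "\<not> ?thesis"
    then have "countable (\<Union>p\<in>f ` A. A \<inter> f -` {p})" using True by (intro countable_UN) auto
    then show False using AU unc by simp
  qed
  then obtain p where p: "p \<in> f ` A" "uncountable (A \<inter> f -` {p})" by blast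
  have "p \<in> P" using p fP by auto
  then have "le p p" using dir by (auto simp: directed_set_def)
  have "infinite (A \<inter> f -` {p})" using p(2) countable_finite by blast
  moreover have "\<forall>a\<in>A \<inter> f -` {p}. le (f a) p" using \<open>le p p\<close> by simp
  moreover have "A \<inter> f -` {p} \<subseteq> A" by simp
  ultimately show ?thesis using \<open>p \<in> P\<close> by blast
next
  case False
  have "f ` A \<subseteq> P \<and> uncountable (f ` A)" using fP False by simp
  then have "\<exists>R. R \<subseteq> f ` A \<and> infinite R \<and> (\<exists>u\<in>P. \<forall>r\<in>R. le r u)"
    using cal unfolding calibre_omega1_omega_def by (rule_tac mp) (erule allE)
  then obtain R' u where R': "R' \<subseteq> f ` A" "infinite R'" "u \<in> P" "\<forall>r\<in>R'. le r u"
    by blast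
  define R where "R = A \<inter> f -` R'"
  have "f ` R = R'" using R'(1) by (auto simp: R_def)
  then have "infinite R" using R'(2) by auto
  moreover have "R \<subseteq> A" by (simp add: R_def)
  moreover have "\<forall>a\<in>R. le (f a) u" using R'(4) by (simp add: R_def)
  ultimately show ?thesis using R'(3) by blast
qed



lemma countable_compact_metrizable:
  fixes X :: "'a topology"
  assumes cr: "completely_regular_space X" and H: "Hausdorff_space X"
    and cpt: "compact_space X" and c: "countable (topspace X)"
  shows "metrizable_space X"
proof (cases "topspace X = {}")
  case True
  then show ?thesis using empty_metrizable_space by simp
next
  case False
  define T where "T = topspace X"
  define TT where "TT = T \<times> T"
  have cTT: "countable TT" using c by (simp add: TT_def T_def)
  have neTT: "TT \<noteq> {}" using False by (simp add: TT_def T_def)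
  define Q where "Q = (\<lambda>(f::'a \<Rightarrow> real) (p::'a \<times> 'a). continuous_map X euclideanreal f \<and> (fst p \<noteq> snd p \<longrightarrow> f (fst p) \<noteq> f (snd p)))"
  have exQ: "\<exists>f. Q f p" if p: "p \<in> TT" for p
  proof (cases "fst p = snd p")
    case True
    then show ?thesis by (intro exI[of _ "\<lambda>_. 0"]) (simp add: Q_def)
  next
    case False
    have "closedin X {snd p}" using p H by (intro closedin_Hausdorff_singleton) (auto simp: TT_def T_def)
    moreover have "fst p \<in> topspace X - {snd p}" using p False by (auto simp: TT_def T_def)
    ultimately obtain f :: "'a \<Rightarrow> real" where f: "continuous_map X (top_of_set {0..1}) f" "f (fst p) = 0" "f ` {snd p} \<subseteq> {1}"
      using cr unfolding completely_regular_space_def by blast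
    have "continuous_map X euclideanreal f" using f(1) continuous_map_in_subtopology by blast
    then show ?thesis using f False by (intro exI[of _ f]) (auto simp: Q_def)
  qed
  define g where "g = (\<lambda>n. SOME f. Q f (from_nat_into TT n))"
  have gQ: "Q (g n) (from_nat_into TT n)" for n
    unfolding g_def using exQ[OF from_nat_into[OF neTT]] by (rule someI_ex)
  define e where "e = (\<lambda>x. (\<lambda>n. g n x) :: nat \<Rightarrow> real)"
  have cont: "continuous_map X euclidean e"
  proof -
    have "continuous_map X (product_topology (\<lambda>i. euclideanreal) UNIV) e"
      unfolding continuous_map_componentwise_UNIV e_def using gQ by (simp add: Q_def)
    then show ?thesis by (simp add: euclidean_product_topology)
  qed
  have inj: "inj_on e T"
  proof (rule inj_onI)
    fix x y assume x: "x \<in> T" and y: "y \<in> T" and exy: "e x = e y"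
    show "x = y"
    proof (rule ccontr)
      assume ne: "x \<noteq> y"
      have "(x, y) \<in> TT" using x y by (simp add: TT_def)
      then obtain n where n: "from_nat_into TT n = (x, y)" using from_nat_into_surj[OF cTT] by blast
      have "g n x \<noteq> g n y" using gQ[of n] n ne by (simp add: Q_def)
      moreover have "g n x = g n y" using exy by (metis e_def)
      ultimately show False by simp
    qed
  qed
  have "closed_map X euclidean e"
    by (rule continuous_imp_closed_map[OF cont cpt]) simp
  then have "embedding_map X euclidean e"
    using injective_closed_imp_embedding_map cont inj T_def by blast
  then have "X homeomorphic_space (subtopology euclidean (e ` topspace X))"
    by (rule embedding_map_imp_homeomorphic_space)
  moreover have "metrizable_space (subtopology (euclidean :: (nat \<Rightarrow> real) topology) (e ` topspace X))"
    by (intro metrizable_space_subtopology metrizable_space_euclidean)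
  ultimately show ?thesis using homeomorphic_metrizable_space by blast
qed



lemma subsingleton_finite:
  assumes "\<forall>a\<in>S. \<forall>b\<in>S. a = b" shows "finite S"
proof (cases "S = {}")
  case False
  then obtain a where "a \<in> S" by auto
  then have "S \<subseteq> {a}" using assms by auto
  then show ?thesis using finite_subset by blast
qed simp

theorem mainTheorem14:
  fixes X :: "'a topology" and U :: "'a \<Rightarrow> 'a set"
    and P :: "'p set" and le :: "'p \<Rightarrow> 'p \<Rightarrow> bool"
  assumes tych: "completely_regular_space X" "Hausdorff_space X"
    and cpt: "compact_space X"
    and scat: "scattered_space X"
    and height_def: "\<forall>x\<in>topspace X. \<exists>a::'o::wellorder.
                        x \<in> cb_deriv X a \<and> x \<notin> nonisol X (cb_deriv X a)"
    and height_ctbl: "\<exists>a::'o. countable {b. b \<le> a} \<and>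
                        (\<forall>x\<in>topspace X. (cb_height X x :: 'o) \<le> a)"
    and U_clopen: "\<forall>x\<in>topspace X. openin X (U x) \<and> closedin X (U x) \<and> x \<in> U x"
    and U_height: "\<forall>x\<in>topspace X. U x \<inter> cb_deriv X (cb_height X x :: 'o) = {x}"
    and U_pc: "point_countable X (U ` topspace X)"
    and dir: "directed_set P le"
    and cal: "calibre_omega1_omega P le"
    and Pbase: "has_P_base X P le"
  shows "countable (topspace X) \<and> metrizable_space X"
proof -
  define T where "T = topspace X"
  obtain a0 :: 'o where a0: "countable {b. b \<le> a0}" "\<forall>x\<in>T. (cb_height X x :: 'o) \<le> a0"
    using height_ctbl T_def by blast
  have injU: "inj_on (\<lambda>z. (U z, cb_height X z :: 'o)) T"
  proof (rule inj_onI)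
    fix x x' assume x: "x \<in> T" and x': "x' \<in> T"
      and eq: "(U x, cb_height X x :: 'o) = (U x', cb_height X x' :: 'o)"
    have "{x} = U x \<inter> cb_deriv X (cb_height X x :: 'o)" using U_height x T_def by auto
    also have "\<dots> = U x' \<inter> cb_deriv X (cb_height X x' :: 'o)" using eq by simp
    also have "\<dots> = {x'}" using U_height x' T_def by auto
    finally show "x = x'" by simp
  qed
  have pcz: "countable {z \<in> T. w \<in> U z}" if w: "w \<in> T" for w
  proof -
    have "(\<lambda>z. (U z, cb_height X z :: 'o)) ` {z \<in> T. w \<in> U z}
          \<subseteq> {V \<in> U ` T. w \<in> V} \<times> {b. b \<le> a0}"
      using a0(2) by auto
    moreover have "countable ({V \<in> U ` T. w \<in> V} \<times> {b. b \<le> a0})"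
    proof (rule countable_SIGMA)
      show "countable {V \<in> U ` T. w \<in> V}"
        using U_pc w unfolding point_countable_def T_def by blast
      show "countable {b. b \<le> a0}" if "i \<in> {V \<in> U ` T. w \<in> V}" for i by (rule a0(1))
    qed
    ultimately have cim: "countable ((\<lambda>z. (U z, cb_height X z :: 'o)) ` {z \<in> T. w \<in> U z})"
      using countable_subset by blast
    have "inj_on (\<lambda>z. (U z, cb_height X z :: 'o)) {z \<in> T. w \<in> U z}"
      using injU by (rule inj_on_subset) auto
    then show ?thesis using cim countable_image_inj_on by blast
  qed
  define small where "small = (\<lambda>z. \<exists>W. openin X W \<and> z \<in> W \<and> countable W)"
  define N where "N = {z \<in> T. \<not> small z}"
  have cT: "countable T"
  proof (rule ccontr)
    assume uT: "\<not> countable T"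
    have "N \<noteq> {}"
    proof
      assume Ne: "N = {}"
      define Uc where "Uc = {W. openin X W \<and> countable W}"
      have "T \<subseteq> \<Union>Uc" using Ne by (auto simp: N_def small_def Uc_def)
      moreover have "\<forall>W\<in>Uc. openin X W" by (auto simp: Uc_def)
      ultimately have "\<exists>F. finite F \<and> F \<subseteq> Uc \<and> topspace X \<subseteq> \<Union>F"
        using cpt[unfolded compact_space_alt, rule_format, of Uc] unfolding T_def by blast
      then obtain F where F: "finite F" "F \<subseteq> Uc" "T \<subseteq> \<Union>F"
        unfolding T_def by blast
      have "countable (\<Union>W\<in>F. W)" using F countable_finite by (intro countable_UN) (auto simp: Uc_def)
      then have "countable (\<Union>F)" by simp
      then show False using F uT countable_subset by blast
    qed
    moreover have "N \<subseteq> topspace X" by (auto simp: N_def T_def)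
    ultimately have "\<exists>y\<in>N. y \<notin> nonisol X N"
      using scat[unfolded scattered_space_def, rule_format, of N] by blast
    then obtain y where yN: "y \<in> N" and yni: "y \<notin> nonisol X N" by blast
    have yT: "y \<in> T" using yN by (auto simp: N_def)
    have "y \<notin> X derived_set_of N" using yni yN by (auto simp: nonisol_def)
    then have "\<not> (\<forall>T'. y \<in> T' \<and> openin X T' \<longrightarrow> (\<exists>z. z \<noteq> y \<and> z \<in> N \<and> z \<in> T'))"
      using yT unfolding derived_set_of_def T_def by simp
    then obtain Ob where Ob: "y \<in> Ob" "openin X Ob" "\<forall>z. z \<noteq> y \<and> z \<in> N \<longrightarrow> z \<notin> Ob"
      by blast
    have reg: "regular_space X" using tych(1) by (rule completely_regular_imp_regular_space)
    have "closedin X (T - Ob)" using Ob(2) T_def by (simp add: closedin_diff)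
    moreover have "y \<in> topspace X - (T - Ob)" using Ob yT T_def by auto
    ultimately have "\<exists>U0. openin X U0 \<and> y \<in> U0 \<and> disjnt (T - Ob) (X closure_of U0)"
      using reg[unfolded regular_space, rule_format, of "T - Ob" y] by blast
    then obtain U0 where U0: "openin X U0" "y \<in> U0" "disjnt (T - Ob) (X closure_of U0)"
      by blast
    define K where "K = X closure_of U0"
    have Kc: "closedin X K" by (simp add: K_def)
    have KT: "K \<subseteq> T" by (simp add: K_def T_def closure_of_subset_topspace)
    have KO: "K \<subseteq> Ob" using KT U0(3) by (auto simp: K_def disjnt_def)
    have U0K: "U0 \<subseteq> K" unfolding K_def using U0(1) by (simp add: closure_of_subset openin_subset)
    have "\<not> small y" using yN by (simp add: N_def)
    then have "uncountable U0" using U0 by (auto simp: small_def)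
    then have "uncountable K" using U0K countable_subset by blast
    define S where "S = K - {y}"
    have uS: "uncountable S" using \<open>uncountable K\<close> by (simp add: S_def)
    have smallS: "small z" if "z \<in> S" for z
    proof -
      have "z \<in> Ob" "z \<in> T" "z \<noteq> y" using that KO KT by (auto simp: S_def)
      then have "z \<notin> N" using Ob(3) by blast
      then show ?thesis using \<open>z \<in> T\<close> by (simp add: N_def)
    qed
    define Wz where "Wz = (\<lambda>z. SOME W. openin X W \<and> z \<in> W \<and> countable W)"
    have Wz: "openin X (Wz z) \<and> z \<in> Wz z \<and> countable (Wz z)" if "z \<in> S" for z
      using smallS[OF that] unfolding small_def Wz_def by (rule someI_ex)
    define V where "V = (\<lambda>z. U z \<inter> Wz z \<inter> (T - {y}))"
    have cy: "closedin X {y}" using tych(2) yT T_def by (simp add: closedin_Hausdorff_singleton)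
    have Vopen: "openin X (V z)" if "z \<in> S" for z
    proof -
      have zT: "z \<in> T" using that KT by (auto simp: S_def)
      have "openin X (T - {y})" using cy T_def by (simp add: openin_diff)
      then show ?thesis unfolding V_def using U_clopen zT Wz[OF that] T_def
        by (intro openin_Int) auto
    qed
    have zV: "z \<in> V z" if "z \<in> S" for z
    proof -
      have zT: "z \<in> T" using that KT by (auto simp: S_def)
      then show ?thesis using U_clopen Wz[OF that] that T_def by (auto simp: V_def S_def)
    qed
    have Vc: "countable (V z)" if "z \<in> S" for z
      using Wz[OF that] countable_subset[of "V z" "Wz z"] by (auto simp: V_def)
    have Vpc: "countable {z \<in> S. w \<in> V z}" if "w \<in> S" for w
    proof -
      have "w \<in> T" using that KT by (auto simp: S_def)
      then have "countable {z \<in> T. w \<in> U z}" by (rule pcz)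
      moreover have "{z \<in> S. w \<in> V z} \<subseteq> {z \<in> T. w \<in> U z}" using KT by (auto simp: S_def V_def)
      ultimately show ?thesis using countable_subset by blast
    qed
    have exA: "\<exists>A. A \<subseteq> S \<and> uncountable A \<and>
           (\<forall>z\<in>S. \<forall>a\<in>A. \<forall>b\<in>A. a \<in> V z \<and> b \<in> V z \<longrightarrow> a = b)"
    proof (rule indep_exists[of S V])
      show "uncountable S" by (rule uS)
      show "countable (V z)" if "z \<in> S" for z using Vc that by blast
      show "countable {z \<in> S. w \<in> V z}" if "w \<in> S" for w using Vpc that by blast
    qed
    then obtain A where A0: "A \<subseteq> S \<and> uncountable A \<and>
           (\<forall>z\<in>S. \<forall>a\<in>A. \<forall>b\<in>A. a \<in> V z \<and> b \<in> V z \<longrightarrow> a = b)"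
      by (rule exE)
    note A = A0[THEN conjunct1] A0[THEN conjunct2, THEN conjunct1] A0[THEN conjunct2, THEN conjunct2]
    obtain B where B: "\<forall>x\<in>topspace X.
        (\<forall>p\<in>P. B x p \<subseteq> topspace X \<and> x \<in> X interior_of (B x p)) \<and>
        (\<forall>W. openin X W \<and> x \<in> W \<longrightarrow> (\<exists>p\<in>P. B x p \<subseteq> W)) \<and>
        (\<forall>p\<in>P. \<forall>p'\<in>P. le p' p \<longrightarrow> B x p \<subseteq> B x p')"
      using Pbase unfolding has_P_base_def by (rule exE)
    define f where "f = (\<lambda>a. SOME p. p \<in> P \<and> B y p \<subseteq> T - {a})"
    have f: "f a \<in> P \<and> B y (f a) \<subseteq> T - {a}" if "a \<in> A" for a
    proof -
      have aS: "a \<in> S" using that A(1) by auto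
      then have aT: "a \<in> T" "a \<noteq> y" using KT by (auto simp: S_def)
      have "closedin X {a}" using tych(2) aT T_def by (simp add: closedin_Hausdorff_singleton)
      then have "openin X (T - {a})" using T_def by (simp add: openin_diff)
      moreover have "y \<in> T - {a}" using yT aT by auto
      moreover have "\<forall>W. openin X W \<and> y \<in> W \<longrightarrow> (\<exists>p\<in>P. B y p \<subseteq> W)" using B yT unfolding T_def by simp
      ultimately have "\<exists>p\<in>P. B y p \<subseteq> T - {a}" by blast
      then show ?thesis unfolding f_def by (metis (mono_tags, lifting) someI_ex)
    qed
    have "f ` A \<subseteq> P" using f by auto
    then obtain R u where R: "R \<subseteq> A" "infinite R" "u \<in> P" "\<forall>a\<in>R. le (f a) u"
      using calibre_extract[of A f P le, OF A(2) _ dir cal] by blast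
    have aBu: "a \<notin> B y u" if "a \<in> R" for a
    proof -
      have aA: "a \<in> A" using that R(1) by auto
      have mono: "\<forall>p\<in>P. \<forall>p'\<in>P. le p' p \<longrightarrow> B y p \<subseteq> B y p'" using B yT T_def by simp
      have "B y u \<subseteq> B y (f a)" using mono R(3) R(4) f[OF aA] that by simp
      then show ?thesis using f[OF aA] by auto
    qed
    define C where "C = K \<inter> (T - X interior_of (B y u))"
    have "closedin X C" unfolding C_def T_def
      using Kc by (intro closedin_Int closedin_diff) auto
    then have Ccpt: "compactin X C" using cpt by (simp add: closedin_compact_space)
    have yint: "y \<in> X interior_of (B y u)" using B yT R(3) unfolding T_def by simp
    have CS: "C \<subseteq> S" using yint by (auto simp: C_def S_def)
    have RC: "R \<subseteq> C"
    proof
      fix a assume a: "a \<in> R"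
      then have "a \<in> S" using R(1) A(1) by auto
      then have "a \<in> K" "a \<in> T" using KT by (auto simp: S_def)
      moreover have "a \<notin> X interior_of (B y u)" using aBu[OF a] interior_of_subset[of X "B y u"] by blast
      ultimately show "a \<in> C" by (auto simp: C_def)
    qed
    have VC1: "\<forall>W\<in>V ` C. openin X W" using Vopen CS by blast
    have VC2: "C \<subseteq> \<Union>(V ` C)" using zV CS by blast
    have "\<exists>F0. finite F0 \<and> F0 \<subseteq> V ` C \<and> C \<subseteq> \<Union>F0"
      using Ccpt[unfolded compactin_def, THEN conjunct2, rule_format, of "V ` C"] VC1 VC2 by blast
    then obtain F0 where F0: "finite F0" "F0 \<subseteq> V ` C" "C \<subseteq> \<Union>F0"
      by blast
    then obtain F where F: "F \<subseteq> C" "finite F" "F0 = V ` F"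
      by (meson finite_subset_image)
    have "R \<subseteq> (\<Union>z\<in>F. V z \<inter> A)" using RC F0(3) F(3) R(1) by auto
    moreover have "finite (\<Union>z\<in>F. V z \<inter> A)"
    proof (intro finite_UN_I F(2))
      fix z assume "z \<in> F"
      then have "z \<in> S" using F(1) CS by auto
      then show "finite (V z \<inter> A)" using A(3) by (intro subsingleton_finite) blast
    qed
    ultimately have "finite R" using finite_subset by blast
    then show False using R(2) by simp
  qed
  moreover have "metrizable_space X"
    using countable_compact_metrizable[OF tych(1) tych(2) cpt] cT T_def by simp
  ultimately show ?thesis using T_def by simp
qed

end
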